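(* The full subcategory $\overline{\mathcal{A}}_p(S)$ of $\mathcal{A}_p(S)$ is a semi-skeleton of $\mathcal{A}_p(S)$, and its number of objects is $\sum_{L\in\mathcal{L}}|H^1(L,T)|$.
   Context: Conventions: normalised cocycles $Z^n$, coboundaries $B^n$, cohomology $H^n$ for right modules written additively; $\mathrm{Ext}(\tau)$ is $G\times M$ with $(g,m)(h,n)=(gh,m^h+n+\tau(g,h))$. Setting: $S$ infinite pro-$p$-group of finite coclass; $T=\gamma_\ell(S)$ ($\ell$ large), $T\cong\mathbb{Z}_p^d$, $P=S/T$ finite, the series $T_0=T$, $T_{i+1}=[T_i,S]$ with all indices $p$; $T$ an additive $P$-module via conjugation; $S=\mathrm{Ext}(\rho)$, $\rho\in Z^2(P,T)$, $T=\{(1,t)\}$. For $L\leq P$, $\overline{L}$ is its full preimage in $S$. $\mathcal{L}$ = elementary abelian $L\leq P$ with $\rho_L\in B^2(L,T)$. For $L\in\mathcal{L}$ fix a complement $C_L=\{(l,t_L(l))\mid l\in L\}$ to $T$ in $\overline{L}$ and put $C_L(\delta)=\{(l,t_L(l)+\delta(l))\}$ for $\delta\in Z^1(L,T)$. Let $T^1(L,T)$ be a transversal of $B^1(L,T)$ in $Z^1(L,T)$. $\mathcal{A}_p(S)$ is the Quillen category (objects: elementary abelian subgroups of $S$; morphisms: injective homomorphisms induced by conjugation in $S$), and $\overline{\mathcal{A}}_p(S)$ is its full subcategory on the objects $C_L(\gamma)$ with $L\in\mathcal{L}$, $\gamma\in T^1(L,T)$. A semi-skeleton of a category is a full subcategory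 containing at least one object from each isomorphism class of objects. *)

theory Defs
  imports "HOL-Algebra.Algebra" "HOL-Library.Equipollence"
begin

text \<open>P is a group G (HOL-Algebra); T is the whole additive type 'm, a right
  P-module via act (m^g = act m g).\<close>

definition right_module :: "('g,'b) monoid_scheme \<Rightarrow> ('m::ab_group_add \<Rightarrow> 'g \<Rightarrow> 'm) \<Rightarrow> bool" where
  "right_module G act \<longleftrightarrow>
     (\<forall>m. act m \<one>\<^bsub>G\<^esub> = m) \<and>
     (\<forall>m. \<forall>g\<in>carrier G. \<forall>h\<in>carrier G. act m (g \<otimes>\<^bsub>G\<^esub> h) = act (act m g) h) \<and>
     (\<forall>m n. \<forall>g\<in>carrier G. act (m + n) g = act m g + act n g)"

text \<open>Normalised 2-cocycles (associativity condition for Ext(tau)).\<close>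
definition Z2 :: "('g,'b) monoid_scheme \<Rightarrow> ('m::ab_group_add \<Rightarrow> 'g \<Rightarrow> 'm) \<Rightarrow> ('g \<Rightarrow> 'g \<Rightarrow> 'm) set" where
  "Z2 G act = {\<tau>. (\<forall>g\<in>carrier G. \<tau> g \<one>\<^bsub>G\<^esub> = 0 \<and> \<tau> \<one>\<^bsub>G\<^esub> g = 0) \<and>
     (\<forall>g\<in>carrier G. \<forall>h\<in>carrier G. \<forall>k\<in>carrier G.
        act (\<tau> g h) k + \<tau> (g \<otimes>\<^bsub>G\<^esub> h) k = \<tau> h k + \<tau> g (h \<otimes>\<^bsub>G\<^esub> k))}"

definition in_B2 :: "'g set \<Rightarrow> ('g,'b) monoid_scheme \<Rightarrow> ('m::ab_group_add \<Rightarrow> 'g \<Rightarrow> 'm) \<Rightarrow> ('g \<Rightarrow> 'g \<Rightarrow> 'm) \<Rightarrow> bool" where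
  "in_B2 L G act \<tau> \<longleftrightarrow> (\<exists>f. f \<one>\<^bsub>G\<^esub> = 0 \<and>
     (\<forall>g\<in>L. \<forall>h\<in>L. \<tau> g h = f (g \<otimes>\<^bsub>G\<^esub> h) - act (f g) h - f h))"

text \<open>1-cocycles and 1-coboundaries of L with values in T (functions are taken
  to be 0 outside L, so that they are determined by their values on L).\<close>
definition Z1 :: "'g set \<Rightarrow> ('g,'b) monoid_scheme \<Rightarrow> ('m::ab_group_add \<Rightarrow> 'g \<Rightarrow> 'm) \<Rightarrow> ('g \<Rightarrow> 'm) set" where
  "Z1 L G act = {\<delta>. (\<forall>g. g \<notin> L \<longrightarrow> \<delta> g = 0) \<and>
     (\<forall>g\<in>L. \<forall>h\<in>L. \<delta> (g \<otimes>\<^bsub>G\<^esub> h) = act (\<delta> g) h + \<delta> h)}"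

definition B1 :: "'g set \<Rightarrow> ('g,'b) monoid_scheme \<Rightarrow> ('m::ab_group_add \<Rightarrow> 'g \<Rightarrow> 'm) \<Rightarrow> ('g \<Rightarrow> 'm) set" where
  "B1 L G act = {\<delta>. \<exists>m. \<forall>g. \<delta> g = (if g \<in> L then act m g - m else 0)}"

definition H1 :: "'g set \<Rightarrow> ('g,'b) monoid_scheme \<Rightarrow> ('m::ab_group_add \<Rightarrow> 'g \<Rightarrow> 'm) \<Rightarrow> ('g \<Rightarrow> 'm) set set" where
  "H1 L G act = (\<lambda>\<delta>. {\<delta>' \<in> Z1 L G act. (\<lambda>g. \<delta>' g - \<delta> g) \<in> B1 L G act}) ` Z1 L G act"

definition ext_group :: "('g,'b) monoid_scheme \<Rightarrow> ('m::ab_group_add \<Rightarrow> 'g \<Rightarrow> 'm) \<Rightarrow> ('g \<Rightarrow> 'g \<Rightarrow> 'm) \<Rightarrow> ('g \<times> 'm) monoid" where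
  "ext_group G act \<tau> = \<lparr> partial_object.carrier = carrier G \<times> UNIV,
     monoid.mult = (\<lambda>(g, m) (h, n). (g \<otimes>\<^bsub>G\<^esub> h, act m h + n + \<tau> g h)),
     monoid.one = (\<one>\<^bsub>G\<^esub>, 0) \<rparr>"

definition elem_abelian :: "('a,'c) monoid_scheme \<Rightarrow> nat \<Rightarrow> 'a set \<Rightarrow> bool" where
  "elem_abelian H p E \<longleftrightarrow> subgroup E H \<and> (\<forall>x\<in>E. \<forall>y\<in>E. x \<otimes>\<^bsub>H\<^esub> y = y \<otimes>\<^bsub>H\<^esub> x) \<and>
     (\<forall>x\<in>E. x [^]\<^bsub>H\<^esub> p = \<one>\<^bsub>H\<^esub>)"

definition calL :: "('g,'b) monoid_scheme \<Rightarrow> nat \<Rightarrow> ('m::ab_group_add \<Rightarrow> 'g \<Rightarrow> 'm) \<Rightarrow> ('g \<Rightarrow> 'g \<Rightarrow> 'm) \<Rightarrow> 'g set set" where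
  "calL G p act \<rho> = {L. elem_abelian G p L \<and> in_B2 L G act \<rho>}"

definition Ccompl :: "'g set \<Rightarrow> ('g \<Rightarrow> 'm::ab_group_add) \<Rightarrow> ('g \<Rightarrow> 'm) \<Rightarrow> ('g \<times> 'm) set" where
  "Ccompl L t \<delta> = {(l, t l + \<delta> l) | l. l \<in> L}"

text \<open>Quillen category A_p(S): objects, morphisms (injective homomorphisms induced
  by conjugation in S), isomorphisms, and semi-skeleta (a full subcategory is
  given by its set of objects).\<close>
definition Ap_obj :: "('a,'c) monoid_scheme \<Rightarrow> nat \<Rightarrow> 'a set set" where
  "Ap_obj S p = {E. elem_abelian S p E}"

definition Ap_mor :: "('a,'c) monoid_scheme \<Rightarrow> 'a set \<Rightarrow> 'a set \<Rightarrow> ('a \<Rightarrow> 'a) \<Rightarrow> bool" where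
  "Ap_mor S E E' f \<longleftrightarrow> (\<exists>s\<in>carrier S. \<forall>x\<in>E. f x = s \<otimes>\<^bsub>S\<^esub> x \<otimes>\<^bsub>S\<^esub> inv\<^bsub>S\<^esub> s)
     \<and> f ` E \<subseteq> E' \<and> inj_on f E"

definition Ap_iso :: "('a,'c) monoid_scheme \<Rightarrow> 'a set \<Rightarrow> 'a set \<Rightarrow> bool" where
  "Ap_iso S E E' \<longleftrightarrow> (\<exists>f g. Ap_mor S E E' f \<and> Ap_mor S E' E g \<and>
     (\<forall>x\<in>E. g (f x) = x) \<and> (\<forall>y\<in>E'. f (g y) = y))"

definition semi_skeleton :: "('a,'c) monoid_scheme \<Rightarrow> nat \<Rightarrow> 'a set set \<Rightarrow> bool" where
  "semi_skeleton S p Ob \<longleftrightarrow> Ob \<subseteq> Ap_obj S p \<and> (\<forall>E\<in>Ap_obj S p. \<exists>E'\<in>Ob. Ap_iso S E E')"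

end

theory Submission
  imports Defs
begin

lemma (in group) conj_cancel:
  "s \<in> carrier G \<Longrightarrow> x \<in> carrier G \<Longrightarrow> inv s \<otimes> (s \<otimes> x \<otimes> inv s) \<otimes> inv (inv s) = x"
  by (simp add: m_assoc flip: m_assoc[of "inv s" s])

lemma (in group) conj_cancel2:
  "s \<in> carrier G \<Longrightarrow> x \<in> carrier G \<Longrightarrow> s \<otimes> (inv s \<otimes> x \<otimes> inv (inv s)) \<otimes> inv s = x"
  by (simp add: m_assoc flip: m_assoc[of s "inv s"])

locale ES = group G for G :: "('g,'b) monoid_scheme" (structure) +
  fixes act :: "'m::ab_group_add \<Rightarrow> 'g \<Rightarrow> 'm" and \<rho> :: "'g \<Rightarrow> 'g \<Rightarrow> 'm"
  assumes rm: "right_module G act" and z2: "\<rho> \<in> Z2 G act"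
begin

abbreviation "S \<equiv> ext_group G act \<rho>"

lemma act_one[simp]: "act m \<one> = m" using rm by (simp add: right_module_def)
lemma act_mult: "g \<in> carrier G \<Longrightarrow> h \<in> carrier G \<Longrightarrow> act m (g \<otimes> h) = act (act m g) h"
  using rm by (simp add: right_module_def)
lemma act_add: "g \<in> carrier G \<Longrightarrow> act (m + n) g = act m g + act n g"
  using rm by (simp add: right_module_def)
lemma act_zero[simp]: "g \<in> carrier G \<Longrightarrow> act 0 g = 0"
  using act_add[of g 0 0] by simp
lemma act_minus: "g \<in> carrier G \<Longrightarrow> act (- m) g = - act m g"
  using act_add[of g m "-m"] by (simp add: eq_neg_iff_add_eq_0 add.commute)
lemma act_diff: "g \<in> carrier G \<Longrightarrow> act (m - n) g = act m g - act n g"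
  using act_add[of g m "-n"] act_minus[of g n] by simp
lemma rho1[simp]: "g \<in> carrier G \<Longrightarrow> \<rho> g \<one> = 0" "g \<in> carrier G \<Longrightarrow> \<rho> \<one> g = 0"
  using z2 by (auto simp: Z2_def)
lemma rho_coc: "g \<in> carrier G \<Longrightarrow> h \<in> carrier G \<Longrightarrow> k \<in> carrier G \<Longrightarrow>
   act (\<rho> g h) k + \<rho> (g \<otimes> h) k = \<rho> h k + \<rho> g (h \<otimes> k)"
  using z2 by (auto simp: Z2_def)

lemma S_mult[simp]: "(g, m) \<otimes>\<^bsub>S\<^esub> (h, n) = (g \<otimes> h, act m h + n + \<rho> g h)"
  by (simp add: ext_group_def)
lemma S_one[simp]: "\<one>\<^bsub>S\<^esub> = (\<one>, 0)" by (simp add: ext_group_def)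
lemma S_carrier[simp]: "carrier S = carrier G \<times> UNIV" by (simp add: ext_group_def)

lemma S_monoid: "monoid S"
proof
  fix x y z assume x: "x \<in> carrier S" and y: "y \<in> carrier S" and z: "z \<in> carrier S"
  obtain g m where xe: "x = (g,m)" "g \<in> carrier G" using x by auto
  obtain h n where ye: "y = (h,n)" "h \<in> carrier G" using y by auto
  obtain k q where ze: "z = (k,q)" "k \<in> carrier G" using z by auto
  have c: "act (\<rho> g h) k = \<rho> h k + \<rho> g (h \<otimes> k) - \<rho> (g \<otimes> h) k"
    using rho_coc[of g h k] xe ye ze by (simp add: algebra_simps eq_diff_eq)
  show "x \<otimes>\<^bsub>S\<^esub> y \<otimes>\<^bsub>S\<^esub> z = x \<otimes>\<^bsub>S\<^esub> (y \<otimes>\<^bsub>S\<^esub> z)"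
    using xe ye ze by (simp add: m_assoc act_add act_mult c algebra_simps)
  show "x \<otimes>\<^bsub>S\<^esub> y \<in> carrier S" using xe ye by simp
next
  show "\<one>\<^bsub>S\<^esub> \<in> carrier S" by simp
  fix x assume "x \<in> carrier S"
  then obtain g m where xe: "x = (g,m)" "g \<in> carrier G" by auto
  show "\<one>\<^bsub>S\<^esub> \<otimes>\<^bsub>S\<^esub> x = x" "x \<otimes>\<^bsub>S\<^esub> \<one>\<^bsub>S\<^esub> = x" using xe by simp_all
qed

lemma S_group: "group S"
proof (rule monoid.group_l_invI[OF S_monoid])
  fix x assume "x \<in> carrier S"
  then obtain g m where xe: "x = (g,m)" "g \<in> carrier G" by auto
  let ?y = "(inv g, act (- m - \<rho> (inv g) g) (inv g))"
  have "act (act (- m - \<rho> (inv g) g) (inv g)) g = - m - \<rho> (inv g) g"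
    using xe by (simp flip: act_mult)
  then have "?y \<otimes>\<^bsub>S\<^esub> x = \<one>\<^bsub>S\<^esub>" using xe by simp
  then show "\<exists>y\<in>carrier S. y \<otimes>\<^bsub>S\<^esub> x = \<one>\<^bsub>S\<^esub>" using xe by force
qed

sublocale S: group S by (rule S_group)

definition Gr :: "'g set \<Rightarrow> ('g \<Rightarrow> 'm) \<Rightarrow> ('g \<times> 'm) set" where
  "Gr L \<sigma> = {(l, \<sigma> l) | l. l \<in> L}"

definition ghom :: "'g set \<Rightarrow> ('g \<Rightarrow> 'm) \<Rightarrow> bool" where
  "ghom L \<sigma> \<longleftrightarrow> (\<forall>g\<in>L. \<forall>h\<in>L. \<sigma> (g \<otimes> h) = act (\<sigma> g) h + \<sigma> h + \<rho> g h)"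

lemma ghom_one: assumes "subgroup L G" "ghom L \<sigma>" shows "\<sigma> \<one> = 0"
proof -
  have "\<one> \<in> L" using assms(1) by (rule subgroup.one_closed)
  then have "\<sigma> (\<one> \<otimes> \<one>) = act (\<sigma> \<one>) \<one> + \<sigma> \<one> + \<rho> \<one> \<one>" using assms(2) ghom_def by blast
  then show ?thesis by simp
qed

lemma ghom_mult: assumes "subgroup L G" "ghom L \<sigma>" "a \<in> L" "b \<in> L"
  shows "(a, \<sigma> a) \<otimes>\<^bsub>S\<^esub> (b, \<sigma> b) = (a \<otimes> b, \<sigma> (a \<otimes> b))"
  using assms by (simp add: ghom_def)

lemma Gr_subgroup: assumes L: "subgroup L G" and h: "ghom L \<sigma>" shows "subgroup (Gr L \<sigma>) S"
proof
  show "Gr L \<sigma> \<subseteq> carrier S" using subgroup.subset[OF L] by (auto simp: Gr_def)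
  show "\<one>\<^bsub>S\<^esub> \<in> Gr L \<sigma>" using ghom_one[OF L h] subgroup.one_closed[OF L]
    by (auto simp: Gr_def intro!: exI[of _ \<one>])
  fix x y assume x: "x \<in> Gr L \<sigma>" and y: "y \<in> Gr L \<sigma>"
  then obtain a b where ab: "x = (a, \<sigma> a)" "y = (b, \<sigma> b)" "a \<in> L" "b \<in> L" by (auto simp: Gr_def)
  then show "x \<otimes>\<^bsub>S\<^esub> y \<in> Gr L \<sigma>" using ghom_mult[OF L h] subgroup.m_closed[OF L]
    by (auto simp: Gr_def simp del: S_mult)
  have ia: "inv a \<in> L" using ab subgroup.m_inv_closed[OF L] by blast
  have aG: "a \<in> carrier G" using ab subgroup.mem_carrier[OF L] by blast
  have "(inv a, \<sigma> (inv a)) \<otimes>\<^bsub>S\<^esub> x = \<one>\<^bsub>S\<^esub>"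
    using ghom_mult[OF L h ia ab(3)] ab aG ghom_one[OF L h] by simp
  then have "inv\<^bsub>S\<^esub> x = (inv a, \<sigma> (inv a))"
    using S.inv_equality ab aG by auto
  then show "inv\<^bsub>S\<^esub> x \<in> Gr L \<sigma>" using ia by (auto simp: Gr_def)
qed

lemma Gr_pow: assumes L: "subgroup L G" and h: "ghom L \<sigma>" and a: "a \<in> L"
  shows "(a, \<sigma> a) [^]\<^bsub>S\<^esub> (n::nat) = (a [^] n, \<sigma> (a [^] n))"
proof (induction n)
  case 0 then show ?case using ghom_one[OF L h] by simp
next
  case (Suc n)
  have an: "a [^] n \<in> L"
  proof (induction n)
    case 0 then show ?case using L by (simp add: subgroup.one_closed)
  next
    case (Suc n) then show ?case using L a by (simp add: subgroup.m_closed)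
  qed
  show ?case using Suc ghom_mult[OF L h an a] by simp
qed

lemma Gr_elem: assumes "elem_abelian G p L" "ghom L \<sigma>" shows "elem_abelian S p (Gr L \<sigma>)"
proof -
  have L: "subgroup L G" using assms by (simp add: elem_abelian_def)
  show ?thesis unfolding elem_abelian_def
  proof (intro conjI ballI)
    show "subgroup (Gr L \<sigma>) S" by (rule Gr_subgroup[OF L assms(2)])
    fix x y assume "x \<in> Gr L \<sigma>" "y \<in> Gr L \<sigma>"
    then obtain a b where ab: "x = (a, \<sigma> a)" "y = (b, \<sigma> b)" "a \<in> L" "b \<in> L" by (auto simp: Gr_def)
    have "a \<otimes> b = b \<otimes> a" using assms(1) ab by (simp add: elem_abelian_def)
    then show "x \<otimes>\<^bsub>S\<^esub> y = y \<otimes>\<^bsub>S\<^esub> x"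
      using ghom_mult[OF L assms(2)] ab by (simp del: S_mult)
  next
    fix x assume "x \<in> Gr L \<sigma>"
    then obtain a where a: "x = (a, \<sigma> a)" "a \<in> L" by (auto simp: Gr_def)
    have "a [^] p = \<one>" using assms(1) a by (simp add: elem_abelian_def)
    then show "x [^]\<^bsub>S\<^esub> p = \<one>\<^bsub>S\<^esub>" using Gr_pow[OF L assms(2) a(2)] a ghom_one[OF L assms(2)] by simp
  qed
qed

lemma conj_S: assumes "l \<in> carrier G"
  shows "(\<one>, n) \<otimes>\<^bsub>S\<^esub> (l, a) \<otimes>\<^bsub>S\<^esub> inv\<^bsub>S\<^esub> (\<one>, n) = (l, a + act n l - n)"
proof -
  have "inv\<^bsub>S\<^esub> (\<one>, n) = (\<one>, - n)" by (rule S.inv_equality) auto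
  then show ?thesis using assms by (simp add: act_add algebra_simps)
qed

lemma inv_S1: "inv\<^bsub>S\<^esub> (\<one>, n) = (\<one>, - n)" by (rule S.inv_equality) auto

lemma pow_T: "(\<one>, t) [^]\<^bsub>S\<^esub> (n::nat) = (\<one>, \<Sum>i<n. t)"
  by (induction n) (simp_all add: add.commute)

lemma fst_hom: "group_hom S G fst"
  unfolding group_hom_def group_hom_axioms_def
  by (auto simp: hom_def S_group is_group)


lemma decomp:
  assumes E: "elem_abelian S p E" and p: "0 < p"
    and tf: "\<forall>(n::nat) (m::'m). 0 < n \<and> (\<Sum>i<n. m) = 0 \<longrightarrow> m = 0"
  shows "\<exists>L \<sigma>. E = Gr L \<sigma> \<and> elem_abelian G p L \<and> ghom L \<sigma>"
proof -
  interpret fh: group_hom S G fst by (rule fst_hom)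
  have sub: "subgroup E S" using E by (simp add: elem_abelian_def)
  have EC: "\<And>x. x \<in> E \<Longrightarrow> x \<in> carrier S" using subgroup.mem_carrier[OF sub] .
  have inj: "x = y" if x: "x \<in> E" and y: "y \<in> E" and f: "fst x = fst y" for x y
  proof -
    define z where "z = x \<otimes>\<^bsub>S\<^esub> inv\<^bsub>S\<^esub> y"
    have zE: "z \<in> E" unfolding z_def using x y sub by (simp add: subgroup.m_closed subgroup.m_inv_closed)
    have xc: "x \<in> carrier S" and yc: "y \<in> carrier S" using EC x y by auto
    have "fst z = fst x \<otimes> inv (fst y)" unfolding z_def using xc yc
      by (metis fh.hom_mult fh.hom_inv S.inv_closed)
    also have "\<dots> = \<one>" using f yc by (simp add: r_inv fh.hom_closed)
    finally have fz: "fst z = \<one>" .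
    then have ze: "z = (\<one>, snd z)" by (metis prod.collapse)
    have "z [^]\<^bsub>S\<^esub> p = \<one>\<^bsub>S\<^esub>" using E zE by (simp add: elem_abelian_def)
    then have "(\<Sum>i<p. snd z) = 0" using pow_T[of "snd z" p] ze by simp
    then have "snd z = 0" using tf p by blast
    then have z1: "z = \<one>\<^bsub>S\<^esub>" using ze by simp
    have "x = x \<otimes>\<^bsub>S\<^esub> (inv\<^bsub>S\<^esub> y \<otimes>\<^bsub>S\<^esub> y)" using xc yc by simp
    also have "\<dots> = z \<otimes>\<^bsub>S\<^esub> y" unfolding z_def using xc yc
      by (metis S.m_assoc S.inv_closed)
    also have "\<dots> = y" using z1 yc by simp
    finally show ?thesis .
  qed
  define L where "L = fst ` E"
  define \<sigma> where "\<sigma> l = snd (SOME x. x \<in> E \<and> fst x = l)" for l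
  have sig: "\<sigma> (fst x) = snd x" if x: "x \<in> E" for x
  proof -
    have "(SOME y. y \<in> E \<and> fst y = fst x) \<in> E \<and> fst (SOME y. y \<in> E \<and> fst y = fst x) = fst x"
      by (rule someI[of _ x]) (use x in simp)
    then show ?thesis unfolding \<sigma>_def using inj x by metis
  qed
  have EG: "E = Gr L \<sigma>"
  proof
    show "E \<subseteq> Gr L \<sigma>" unfolding Gr_def L_def
    proof
      fix x assume "x \<in> E"
      then show "x \<in> {(l, \<sigma> l) |l. l \<in> fst ` E}"
        using sig[of x] by (metis (mono_tags, lifting) image_eqI mem_Collect_eq prod.collapse)
    qed
    show "Gr L \<sigma> \<subseteq> E" unfolding Gr_def L_def
    proof
      fix z assume "z \<in> {(l, \<sigma> l) |l. l \<in> fst ` E}"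
      then obtain x where "x \<in> E" "z = (fst x, \<sigma> (fst x))" by auto
      then show "z \<in> E" using sig[of x] by simp
    qed
  qed
  have Ls: "subgroup L G" unfolding L_def by (rule fh.subgroup_img_is_subgroup[OF sub])
  have gh: "ghom L \<sigma>" unfolding ghom_def
  proof (intro ballI)
    fix a b assume "a \<in> L" "b \<in> L"
    then obtain x y where x: "x \<in> E" "a = fst x" and y: "y \<in> E" "b = fst y" unfolding L_def by auto
    have xe: "x = (a, \<sigma> a)" using sig x by (metis prod.collapse)
    have ye: "y = (b, \<sigma> b)" using sig y by (metis prod.collapse)
    have xy: "x \<otimes>\<^bsub>S\<^esub> y \<in> E" using x y sub by (simp add: subgroup.m_closed)
    have "\<sigma> (fst (x \<otimes>\<^bsub>S\<^esub> y)) = snd (x \<otimes>\<^bsub>S\<^esub> y)" by (rule sig[OF xy])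
    moreover have "x \<otimes>\<^bsub>S\<^esub> y = (a \<otimes> b, act (\<sigma> a) b + \<sigma> b + \<rho> a b)"
      by (subst xe, subst ye, simp)
    ultimately show "\<sigma> (a \<otimes> b) = act (\<sigma> a) b + \<sigma> b + \<rho> a b" by simp
  qed
  have ea: "elem_abelian G p L" unfolding elem_abelian_def
  proof (intro conjI ballI)
    show "subgroup L G" by (rule Ls)
    fix a b assume "a \<in> L" "b \<in> L"
    then obtain x y where x: "x \<in> E" "a = fst x" and y: "y \<in> E" "b = fst y" unfolding L_def by auto
    have "x \<otimes>\<^bsub>S\<^esub> y = y \<otimes>\<^bsub>S\<^esub> x" using E x y by (simp add: elem_abelian_def)
    then have "fst (x \<otimes>\<^bsub>S\<^esub> y) = fst (y \<otimes>\<^bsub>S\<^esub> x)" by simp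
    then show "a \<otimes> b = b \<otimes> a" using x y EC by simp
  next
    fix a assume "a \<in> L"
    then obtain x where x: "x \<in> E" "a = fst x" unfolding L_def by auto
    have "x [^]\<^bsub>S\<^esub> p = \<one>\<^bsub>S\<^esub>" using E x by (simp add: elem_abelian_def)
    then have "fst (x [^]\<^bsub>S\<^esub> p) = \<one>" by simp
    then show "a [^] p = \<one>" using fh.hom_nat_pow[of x p] x EC by simp
  qed
  show ?thesis using EG ea gh by blast
qed

lemma conj_iso:
  assumes LG: "L \<subseteq> carrier G" and \<sigma>': "\<And>l. l \<in> L \<Longrightarrow> \<sigma>' l = \<sigma> l + act n l - n"
  shows "Ap_iso S (Gr L \<sigma>) (Gr L \<sigma>')"
proof -
  define s where "s = (\<one>, n)"
  have sc: "s \<in> carrier S" unfolding s_def by simp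
  define f where "f x = s \<otimes>\<^bsub>S\<^esub> x \<otimes>\<^bsub>S\<^esub> inv\<^bsub>S\<^esub> s" for x
  define g where "g y = inv\<^bsub>S\<^esub> s \<otimes>\<^bsub>S\<^esub> y \<otimes>\<^bsub>S\<^esub> inv\<^bsub>S\<^esub> (inv\<^bsub>S\<^esub> s)" for y
  have GC: "Gr L \<tau> \<subseteq> carrier S" for \<tau> using LG by (auto simp: Gr_def)
  have fi: "f ` Gr L \<sigma> \<subseteq> Gr L \<sigma>'"
  proof
    fix z assume "z \<in> f ` Gr L \<sigma>"
    then obtain l where l: "l \<in> L" "z = f (l, \<sigma> l)" by (auto simp: Gr_def)
    then have "z = (l, \<sigma>' l)" unfolding f_def s_def using conj_S[of l n "\<sigma> l"] LG \<sigma>' by auto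
    then show "z \<in> Gr L \<sigma>'" using l by (auto simp: Gr_def)
  qed
  have gi: "g ` Gr L \<sigma>' \<subseteq> Gr L \<sigma>"
  proof
    fix z assume "z \<in> g ` Gr L \<sigma>'"
    then obtain l where l: "l \<in> L" "z = g (l, \<sigma>' l)" by (auto simp: Gr_def)
    have lG: "l \<in> carrier G" using l LG by auto
    have "inv\<^bsub>S\<^esub> s = (\<one>, - n)" unfolding s_def by (rule inv_S1)
    then have "g (l, \<sigma>' l) = (l, \<sigma>' l + act (- n) l - - n)"
      unfolding g_def using conj_S[of l "- n" "\<sigma>' l"] lG by simp
    also have "\<dots> = (l, \<sigma> l)" using \<sigma>' l lG by (simp add: act_minus)
    finally show "z \<in> Gr L \<sigma>" using l by (auto simp: Gr_def)
  qed
  have gf: "g (f x) = x" if "x \<in> Gr L \<sigma>" for x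
    unfolding f_def g_def using S.conj_cancel[OF sc] GC that by blast
  have fg: "f (g y) = y" if "y \<in> Gr L \<sigma>'" for y
    unfolding f_def g_def using S.conj_cancel2[OF sc] GC that by blast
  have "Ap_mor S (Gr L \<sigma>) (Gr L \<sigma>') f"
    unfolding Ap_mor_def using sc fi gf by (metis f_def inj_on_inverseI)
  moreover have "Ap_mor S (Gr L \<sigma>') (Gr L \<sigma>) g"
    unfolding Ap_mor_def using sc gi fg S.inv_closed[OF sc] by (metis g_def inj_on_inverseI)
  ultimately show ?thesis unfolding Ap_iso_def using gf fg by blast
qed

lemma B1_add: assumes "L \<subseteq> carrier G" "a \<in> B1 L G act" "b \<in> B1 L G act"
  shows "(\<lambda>g. a g + b g) \<in> B1 L G act"
proof -
  obtain m where m: "\<forall>g. a g = (if g \<in> L then act m g - m else 0)" using assms(2) by (auto simp: B1_def)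
  obtain n where n: "\<forall>g. b g = (if g \<in> L then act n g - n else 0)" using assms(3) by (auto simp: B1_def)
  have "\<forall>g. a g + b g = (if g \<in> L then act (m + n) g - (m + n) else 0)"
    using m n assms(1) by (auto simp: act_add)
  then show ?thesis by (auto simp: B1_def)
qed

lemma B1_diff: assumes "L \<subseteq> carrier G" "a \<in> B1 L G act" "b \<in> B1 L G act"
  shows "(\<lambda>g. a g - b g) \<in> B1 L G act"
proof -
  obtain m where m: "\<forall>g. a g = (if g \<in> L then act m g - m else 0)" using assms(2) by (auto simp: B1_def)
  obtain n where n: "\<forall>g. b g = (if g \<in> L then act n g - n else 0)" using assms(3) by (auto simp: B1_def)
  have "\<forall>g. a g - b g = (if g \<in> L then act (m - n) g - (m - n) else 0)"
    using m n assms(1) by (auto simp: act_diff)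
  then show ?thesis by (auto simp: B1_def)
qed

lemma B1_zero: assumes "L \<subseteq> carrier G" shows "(\<lambda>g. 0) \<in> B1 L G act"
  unfolding B1_def using assms by (auto intro!: exI[of _ 0])

lemma B1_self: assumes "L \<subseteq> carrier G" shows "(\<lambda>g. d g - d g) \<in> B1 L G act"
  using B1_zero[OF assms] by simp

end
theorem lemma6p1:
  fixes G :: "('g,'b) monoid_scheme"
    and act :: "'m::ab_group_add \<Rightarrow> 'g \<Rightarrow> 'm"
    and \<rho> :: "'g \<Rightarrow> 'g \<Rightarrow> 'm"
    and p :: nat
    and tL :: "'g set \<Rightarrow> 'g \<Rightarrow> 'm"
    and Tr :: "'g set \<Rightarrow> ('g \<Rightarrow> 'm) set"
  assumes "Factorial_Ring.prime p"
    and "group G" and "finite (carrier G)" and "\<exists>k. card (carrier G) = p ^ k"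
    and "right_module G act"
    and torsion_free: "\<forall>(n::nat) (m::'m). 0 < n \<and> (\<Sum>i<n. m) = 0 \<longrightarrow> m = 0"
    and "\<rho> \<in> Z2 G act"
    and complements: "\<forall>L\<in>calL G p act \<rho>. \<forall>g\<in>L. \<forall>h\<in>L.
           tL L (g \<otimes>\<^bsub>G\<^esub> h) = act (tL L g) h + tL L h + \<rho> g h"
    and transversals: "\<forall>L\<in>calL G p act \<rho>. Tr L \<subseteq> Z1 L G act \<and>
           (\<forall>\<delta>\<in>Z1 L G act. \<exists>!\<gamma>. \<gamma> \<in> Tr L \<and> (\<lambda>g. \<delta> g - \<gamma> g) \<in> B1 L G act)"
  shows "semi_skeleton (ext_group G act \<rho>) p
           {Ccompl L (tL L) \<gamma> | L \<gamma>. L \<in> calL G p act \<rho> \<and> \<gamma> \<in> Tr L}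
       \<and> {Ccompl L (tL L) \<gamma> | L \<gamma>. L \<in> calL G p act \<rho> \<and> \<gamma> \<in> Tr L}
           \<approx> Sigma (calL G p act \<rho>) (\<lambda>L. H1 L G act)
       \<and> ((\<forall>L\<in>calL G p act \<rho>. finite (H1 L G act)) \<longrightarrow>
           card {Ccompl L (tL L) \<gamma> | L \<gamma>. L \<in> calL G p act \<rho> \<and> \<gamma> \<in> Tr L}
             = (\<Sum>L\<in>calL G p act \<rho>. card (H1 L G act)))"
proof -
  interpret ES G act \<rho> using assms(2,5,7) by (simp add: ES_def ES_axioms_def)
  define cL where "cL = calL G p act \<rho>"
  define Ob where "Ob = {Ccompl L (tL L) \<gamma> | L \<gamma>. L \<in> cL \<and> \<gamma> \<in> Tr L}"
  have p0: "0 < p" using assms(1) by (simp add: prime_gt_0_nat)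
  have Cc: "Ccompl L t \<gamma> = Gr L (\<lambda>l. t l + \<gamma> l)" for L t \<gamma> by (simp add: Ccompl_def Gr_def)
  have LG: "L \<subseteq> carrier G" if "L \<in> cL" for L
    using that by (auto simp: cL_def calL_def elem_abelian_def dest: subgroup.subset)
  have Ls: "subgroup L G" if "L \<in> cL" for L
    using that by (auto simp: cL_def calL_def elem_abelian_def)
  have gh: "ghom L (\<lambda>l. tL L l + \<gamma> l)" if L: "L \<in> cL" and g: "\<gamma> \<in> Z1 L G act" for L \<gamma>
    unfolding ghom_def
  proof (intro ballI)
    fix a b assume ab: "a \<in> L" "b \<in> L"
    have "tL L (a \<otimes>\<^bsub>G\<^esub> b) = act (tL L a) b + tL L b + \<rho> a b" using complements L ab by (auto simp: cL_def)
    moreover have "\<gamma> (a \<otimes>\<^bsub>G\<^esub> b) = act (\<gamma> a) b + \<gamma> b" using g ab by (auto simp: Z1_def)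
    moreover have "b \<in> carrier G" using LG[OF L] ab by auto
    ultimately show "tL L (a \<otimes>\<^bsub>G\<^esub> b) + \<gamma> (a \<otimes>\<^bsub>G\<^esub> b) = act (tL L a + \<gamma> a) b + (tL L b + \<gamma> b) + \<rho> a b"
      by (simp add: act_add algebra_simps)
  qed
  have TrZ: "Tr L \<subseteq> Z1 L G act" if "L \<in> cL" for L using transversals that by (auto simp: cL_def)
  have Ea: "elem_abelian G p L" if "L \<in> cL" for L using that by (auto simp: cL_def calL_def)
  have obj: "Ob \<subseteq> Ap_obj S p"
  proof
    fix E assume "E \<in> Ob"
    then obtain L \<gamma> where "L \<in> cL" "\<gamma> \<in> Tr L" "E = Ccompl L (tL L) \<gamma>" by (auto simp: Ob_def)
    then show "E \<in> Ap_obj S p" unfolding Ap_obj_def Cc using Gr_elem Ea gh TrZ by blast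
  qed
  have iso: "\<exists>E'\<in>Ob. Ap_iso S E E'" if E: "E \<in> Ap_obj S p" for E
  proof -
    obtain L \<sigma> where EG: "E = Gr L \<sigma>" and ea: "elem_abelian G p L" and g: "ghom L \<sigma>"
      using decomp[OF _ p0 torsion_free, of E] E by (auto simp: Ap_obj_def)
    have Lsub: "subgroup L G" using ea by (simp add: elem_abelian_def)
    have LC: "L \<subseteq> carrier G" using subgroup.subset[OF Lsub] .
    have s1: "\<sigma> \<one>\<^bsub>G\<^esub> = 0" by (rule ghom_one[OF Lsub g])
    have "in_B2 L G act \<rho>" unfolding in_B2_def
      by (rule exI[of _ "\<lambda>x. if x \<in> L then \<sigma> x else 0"])
         (use s1 g subgroup.m_closed[OF Lsub] in \<open>auto simp: ghom_def\<close>)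
    then have L: "L \<in> cL" using ea by (simp add: cL_def calL_def)
    define \<delta> where "\<delta> x = (if x \<in> L then \<sigma> x - tL L x else 0)" for x
    have dZ: "\<delta> \<in> Z1 L G act" unfolding Z1_def
    proof (safe)
      fix x assume "x \<notin> L" then show "\<delta> x = 0" by (simp add: \<delta>_def)
    next
      fix a b assume ab: "a \<in> L" "b \<in> L"
      have "tL L (a \<otimes>\<^bsub>G\<^esub> b) = act (tL L a) b + tL L b + \<rho> a b" using complements L ab by (auto simp: cL_def)
      moreover have "\<sigma> (a \<otimes>\<^bsub>G\<^esub> b) = act (\<sigma> a) b + \<sigma> b + \<rho> a b" using g ab by (auto simp: ghom_def)
      moreover have "b \<in> carrier G" using LC ab by auto
      moreover have "a \<otimes>\<^bsub>G\<^esub> b \<in> L" using ab subgroup.m_closed[OF Lsub] by auto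
      ultimately show "\<delta> (a \<otimes>\<^bsub>G\<^esub> b) = act (\<delta> a) b + \<delta> b"
        using ab by (simp add: \<delta>_def act_diff algebra_simps)
    qed
    obtain \<gamma> where gT: "\<gamma> \<in> Tr L" and gB: "(\<lambda>x. \<delta> x - \<gamma> x) \<in> B1 L G act"
      using transversals L dZ unfolding cL_def Ball_def Ex1_def by blast
    obtain m where m: "\<forall>x. \<delta> x - \<gamma> x = (if x \<in> L then act m x - m else 0)" using gB by (auto simp: B1_def)
    have "Ap_iso S (Gr L \<sigma>) (Gr L (\<lambda>l. tL L l + \<gamma> l))"
    proof (rule conj_iso[OF LC, of _ _ "- m"])
      fix l assume l: "l \<in> L"
      then have "\<sigma> l - tL L l - \<gamma> l = act m l - m" using m[rule_format, of l] by (simp add: \<delta>_def)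
      then have e: "\<sigma> l = tL L l + \<gamma> l + (act m l - m)" by (simp add: diff_eq_eq)
      have lC: "l \<in> carrier G" using l LC by auto
      show "tL L l + \<gamma> l = \<sigma> l + act (- m) l - - m"
        by (simp add: e act_minus[OF lC])
    qed
    moreover have "Gr L (\<lambda>l. tL L l + \<gamma> l) \<in> Ob" unfolding Ob_def Cc[symmetric] using L gT by blast
    ultimately show ?thesis using EG by blast
  qed
  have skel: "semi_skeleton S p Ob" unfolding semi_skeleton_def using obj iso by blast
  define F where "F = (\<lambda>(L, \<gamma>). Ccompl L (tL L) \<gamma>)"
  have fstC: "fst ` Ccompl L t \<gamma> = L" for L t \<gamma> by (force simp: Ccompl_def)
  have bF: "bij_betw F (Sigma cL Tr) Ob"
  proof (rule bij_betw_imageI)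
    show "inj_on F (Sigma cL Tr)"
    proof (rule inj_onI, clarify)
      fix L \<gamma> L' \<gamma>' assume A: "L \<in> cL" "\<gamma> \<in> Tr L" "L' \<in> cL" "\<gamma>' \<in> Tr L'" and eq: "F (L, \<gamma>) = F (L', \<gamma>')"
      then have eq': "Ccompl L (tL L) \<gamma> = Ccompl L' (tL L') \<gamma>'" by (simp add: F_def)
      then have LL: "L = L'" using fstC by metis
      have "\<gamma> x = \<gamma>' x" for x
      proof (cases "x \<in> L")
        case True
        then have "(x, tL L x + \<gamma> x) \<in> Ccompl L' (tL L') \<gamma>'" using eq' by (auto simp: Ccompl_def)
        then show ?thesis using LL by (auto simp: Ccompl_def)
      next
        case False
        have "\<gamma> \<in> Z1 L G act" "\<gamma>' \<in> Z1 L G act" using A LL TrZ by auto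
        then show ?thesis using False by (simp add: Z1_def)
      qed
      then show "L = L' \<and> \<gamma> = \<gamma>'" using LL by auto
    qed
    show "F ` Sigma cL Tr = Ob" unfolding Ob_def F_def by force
  qed
  define cls where "cls L \<delta> = {\<delta>' \<in> Z1 L G act. (\<lambda>g. \<delta>' g - \<delta> g) \<in> B1 L G act}" for L \<delta>
  have H1c: "H1 L G act = cls L ` Z1 L G act" for L unfolding H1_def cls_def by simp
  have clsTr: "bij_betw (cls L) (Tr L) (H1 L G act)" if L: "L \<in> cL" for L
  proof (rule bij_betw_imageI)
    have LC: "L \<subseteq> carrier G" using LG[OF L] .
    show "inj_on (cls L) (Tr L)"
    proof (rule inj_onI)
      fix a b assume a: "a \<in> Tr L" and b: "b \<in> Tr L" and e: "cls L a = cls L b"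
      have "a \<in> cls L a" using a TrZ[OF L] B1_self[OF LC, of a] by (auto simp: cls_def)
      then have "a \<in> cls L b" using e by simp
      then have ab: "(\<lambda>g. a g - b g) \<in> B1 L G act" by (simp add: cls_def)
      have aZ: "a \<in> Z1 L G act" using a TrZ[OF L] by auto
      have "\<exists>!\<gamma>. \<gamma> \<in> Tr L \<and> (\<lambda>g. a g - \<gamma> g) \<in> B1 L G act" using transversals L aZ by (auto simp: cL_def)
      then show "a = b" using a b ab B1_self[OF LC, of a] by blast
    qed
    show "cls L ` Tr L = H1 L G act"
    proof
      show "cls L ` Tr L \<subseteq> H1 L G act" unfolding H1c using TrZ[OF L] by auto
      show "H1 L G act \<subseteq> cls L ` Tr L"
      proof
        fix C assume "C \<in> H1 L G act"
        then obtain d where dZ: "d \<in> Z1 L G act" and C: "C = cls L d" unfolding H1c by auto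
        obtain \<gamma> where gT: "\<gamma> \<in> Tr L" and gB: "(\<lambda>x. d x - \<gamma> x) \<in> B1 L G act"
          using transversals L dZ unfolding cL_def Ball_def Ex1_def by blast
        have "cls L d = cls L \<gamma>"
        proof -
          have "(\<lambda>g. x g - d g) \<in> B1 L G act \<longleftrightarrow> (\<lambda>g. x g - \<gamma> g) \<in> B1 L G act" for x
          proof
            assume "(\<lambda>g. x g - d g) \<in> B1 L G act"
            from B1_add[OF LC this gB] show "(\<lambda>g. x g - \<gamma> g) \<in> B1 L G act" by simp
          next
            assume "(\<lambda>g. x g - \<gamma> g) \<in> B1 L G act"
            from B1_diff[OF LC this gB] show "(\<lambda>g. x g - d g) \<in> B1 L G act" by simp
          qed
          then show ?thesis by (simp add: cls_def)
        qed
        then show "C \<in> cls L ` Tr L" using C gT by auto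
      qed
    qed
  qed
  define h where "h = (\<lambda>(L, \<gamma>). (L, cls L \<gamma>))"
  have bh: "bij_betw h (Sigma cL Tr) (Sigma cL (\<lambda>L. H1 L G act))"
  proof (rule bij_betw_imageI)
    show "inj_on h (Sigma cL Tr)"
      by (rule inj_onI) (auto simp: h_def dest: clsTr bij_betw_imp_inj_on inj_onD)
    show "h ` Sigma cL Tr = Sigma cL (\<lambda>L. H1 L G act)"
    proof
      show "h ` Sigma cL Tr \<subseteq> Sigma cL (\<lambda>L. H1 L G act)"
        using clsTr by (auto simp: h_def bij_betw_def)
      show "Sigma cL (\<lambda>L. H1 L G act) \<subseteq> h ` Sigma cL Tr"
      proof clarify
        fix L C assume L: "L \<in> cL" and C: "C \<in> H1 L G act"
        then obtain \<gamma> where "\<gamma> \<in> Tr L" "C = cls L \<gamma>" using clsTr[OF L] by (auto simp: bij_betw_def)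
        then show "(L, C) \<in> h ` Sigma cL Tr" using L by (force simp: h_def)
      qed
    qed
  qed
  have eqp: "Ob \<approx> Sigma cL (\<lambda>L. H1 L G act)"
  proof -
    have "Sigma cL Tr \<approx> Ob" using bF by (auto simp: eqpoll_def)
    moreover have "Sigma cL Tr \<approx> Sigma cL (\<lambda>L. H1 L G act)" using bh by (auto simp: eqpoll_def)
    ultimately show ?thesis by (meson eqpoll_sym eqpoll_trans)
  qed
  have cnt: "card Ob = (\<Sum>L\<in>cL. card (H1 L G act))" if fin: "\<forall>L\<in>cL. finite (H1 L G act)"
  proof -
    have "cL \<subseteq> Pow (carrier G)" using LG by auto
    then have fc: "finite cL" using assms(3) by (meson finite_Pow_iff rev_finite_subset)
    obtain f where "bij_betw f Ob (Sigma cL (\<lambda>L. H1 L G act))" using eqp by (auto simp: eqpoll_def)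
    then have "card Ob = card (Sigma cL (\<lambda>L. H1 L G act))" by (rule bij_betw_same_card)
    also have "\<dots> = (\<Sum>L\<in>cL. card (H1 L G act))" using fc fin by simp
    finally show ?thesis .
  qed
  show ?thesis using skel eqp cnt unfolding Ob_def cL_def by blast
qed

end
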